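(* There is a universal constant $c>0$ such that the following holds. Let $\Omega \subset \mathbb{R}^2$ be a connected domain and let $\varepsilon>0$ satisfy $\varepsilon \le |\Omega|^{1/2}/8$. Then $$ \left| \left\{x \in \mathbb{R}^2 \setminus \Omega: d(x, \Omega) \leq \varepsilon\right\} \right| \leq c \cdot \varepsilon \cdot |\partial \Omega|.$$
   Context: $|\Omega|$ and the left-hand side denote two-dimensional Lebesgue measure; $d(x,\Omega)$ is Euclidean distance from $x$ to $\Omega$; $|\partial\Omega|$ denotes the one-dimensional Hausdorff measure (length) of the boundary, with the convention $|\partial\Omega|=\infty$ if the boundary is not rectifiable. *)

theory Defs
  imports "HOL-Analysis.Analysis"
begin

text \<open>One-dimensional Hausdorff measure (normalised so that it agrees with length
  on rectifiable curves): the delta-premeasure is the infimum of the sums of diameters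
  over countable covers by bounded sets of diameter at most delta; the measure is the
  supremum (= limit as delta goes to 0) of these.\<close>

definition hausdorff1_pre :: "real \<Rightarrow> 'a::metric_space set \<Rightarrow> ennreal" where
  "hausdorff1_pre \<delta> S =
     (INF C \<in> {C :: nat \<Rightarrow> 'a set. S \<subseteq> (\<Union>i. C i) \<and> (\<forall>i. bounded (C i) \<and> diameter (C i) \<le> \<delta>)}.
        (\<Sum>i. ennreal (diameter (C i))))"

definition hausdorff1 :: "'a::metric_space set \<Rightarrow> ennreal" where
  "hausdorff1 S = (SUP \<delta> \<in> {0<..}. hausdorff1_pre \<delta> S)"

end

theory Submission imports Defs begin

definition pt :: "real \<Rightarrow> real \<Rightarrow> real^2" where
  "pt u v = (\<chi> j. if j = 1 then u else v)"

lemma pt_nth[simp]: "pt u v $ 1 = u" "pt u v $ 2 = v"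
  by (auto simp: pt_def)

lemma cbox_pt: "p \<in> cbox (pt a b) (pt c d) \<longleftrightarrow> a \<le> p$1 \<and> p$1 \<le> c \<and> b \<le> p$2 \<and> p$2 \<le> d"
  by (auto simp: mem_box_cart forall_2)

lemma box_pt: "p \<in> box (pt a b) (pt c d) \<longleftrightarrow> a < p$1 \<and> p$1 < c \<and> b < p$2 \<and> p$2 < d"
  by (auto simp: mem_box_cart forall_2)

lemma emeasure_cbox_pt:
  assumes "a \<le> c" "b \<le> d"
  shows "emeasure lborel (cbox (pt a b) (pt c d)) = ennreal ((c - a) * (d - b))"
proof -
  have ne: "cbox (pt a b) (pt c d) \<noteq> {}" proof -
    have "pt a b \<in> cbox (pt a b) (pt c d)" using assms by (simp add: cbox_pt)
    then show ?thesis by blast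
  qed
  have "emeasure lborel (cbox (pt a b) (pt c d)) = ennreal (measure lborel (cbox (pt a b) (pt c d)))"
    using ne box_ne_empty(1)[of "pt a b" "pt c d"] by (simp add: emeasure_lborel_cbox_eq content_cbox_if inner_diff_left)
  also have "measure lborel (cbox (pt a b) (pt c d)) = (c - a) * (d - b)"
    using ne by (simp add: content_cbox_cart UNIV_2)
  finally show ?thesis .
qed

lemma interval_cover:
  fixes F :: "nat \<Rightarrow> real set"
  assumes "l < r" "{l<..<r} \<subseteq> (\<Union>i. F i)" "\<And>i. F i \<in> sets borel"
  shows "ennreal (r - l) \<le> (\<Sum>i. emeasure lborel (F i))"
proof -
  have "ennreal (r - l) = emeasure lborel {l<..<r}" using assms by simp
  also have "\<dots> \<le> emeasure lborel (\<Union>i. F i)" by (rule emeasure_mono[OF assms(2)]) (use assms in auto)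
  also have "\<dots> \<le> (\<Sum>i. emeasure lborel (F i))" by (rule emeasure_subadditive_countably) (use assms in auto)
  finally show ?thesis .
qed

lemma seg_side:
  assumes "connected S" "S \<inter> frontier \<Omega> = {}"
  shows "S \<subseteq> \<Omega> \<or> S \<inter> \<Omega> = {}"
  using connected_Int_frontier[OF assms(1), of \<Omega>] assms(2) by blast

lemma rect_lemma:
  fixes \<Omega> :: "(real^2) set"
  assumes conn: "connected \<Omega>"
    and u: "\<alpha>1 \<le> u1" "u1 < u2" "u2 \<le> \<alpha>2"
    and v: "\<beta>1 \<le> v1" "v1 < v2" "v2 \<le> \<beta>2"
    and V1: "cbox (pt u1 \<beta>1) (pt u1 \<beta>2) \<inter> frontier \<Omega> = {}"
    and V2: "cbox (pt u2 \<beta>1) (pt u2 \<beta>2) \<inter> frontier \<Omega> = {}"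
    and H1: "cbox (pt \<alpha>1 v1) (pt \<alpha>2 v1) \<inter> frontier \<Omega> = {}"
    and H2: "cbox (pt \<alpha>1 v2) (pt \<alpha>2 v2) \<inter> frontier \<Omega> = {}"
    and y: "y \<in> \<Omega>" "y \<in> box (pt u1 v1) (pt u2 v2)"
    and out: "\<not> \<Omega> \<subseteq> cbox (pt u1 v1) (pt u2 v2)"
  shows "cbox (pt \<alpha>1 v1) (pt \<alpha>2 v1) \<subseteq> \<Omega>"
proof (rule ccontr)
  assume nH1: "\<not> ?thesis"
  have sH1: "cbox (pt \<alpha>1 v1) (pt \<alpha>2 v1) \<inter> \<Omega> = {}"
    using nH1 seg_side[OF _ H1] by (meson is_interval_cbox is_interval_connected)
  have "pt u1 v1 \<in> cbox (pt \<alpha>1 v1) (pt \<alpha>2 v1)" "pt u1 v1 \<in> cbox (pt u1 \<beta>1) (pt u1 \<beta>2)"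
    using u v by (auto simp: cbox_pt)
  then have sV1: "cbox (pt u1 \<beta>1) (pt u1 \<beta>2) \<inter> \<Omega> = {}"
    using seg_side[OF _ V1] sH1 by (meson disjoint_iff is_interval_cbox is_interval_connected subsetD)
  have "pt u2 v1 \<in> cbox (pt \<alpha>1 v1) (pt \<alpha>2 v1)" "pt u2 v1 \<in> cbox (pt u2 \<beta>1) (pt u2 \<beta>2)"
    using u v by (auto simp: cbox_pt)
  then have sV2: "cbox (pt u2 \<beta>1) (pt u2 \<beta>2) \<inter> \<Omega> = {}"
    using seg_side[OF _ V2] sH1 by (meson disjoint_iff is_interval_cbox is_interval_connected subsetD)
  have "pt u1 v2 \<in> cbox (pt \<alpha>1 v2) (pt \<alpha>2 v2)" "pt u1 v2 \<in> cbox (pt u1 \<beta>1) (pt u1 \<beta>2)"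
    using u v by (auto simp: cbox_pt)
  then have sH2: "cbox (pt \<alpha>1 v2) (pt \<alpha>2 v2) \<inter> \<Omega> = {}"
    using seg_side[OF _ H2] sV1 by (meson disjoint_iff is_interval_cbox is_interval_connected subsetD)
  have "\<Omega> \<inter> cbox (pt u1 v1) (pt u2 v2) \<noteq> {}" using y box_subset_cbox by blast
  moreover have "\<Omega> - cbox (pt u1 v1) (pt u2 v2) \<noteq> {}" using out by blast
  ultimately obtain p where p: "p \<in> \<Omega>" "p \<in> cbox (pt u1 v1) (pt u2 v2)" "p \<notin> box (pt u1 v1) (pt u2 v2)"
    using connected_Int_frontier[OF conn] frontier_cbox by blast
  then have "p$1 = u1 \<or> p$1 = u2 \<or> p$2 = v1 \<or> p$2 = v2" "u1 \<le> p$1" "p$1 \<le> u2" "v1 \<le> p$2" "p$2 \<le> v2"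
    by (auto simp: cbox_pt box_pt)
  then have "p \<in> cbox (pt u1 \<beta>1) (pt u1 \<beta>2) \<or> p \<in> cbox (pt u2 \<beta>1) (pt u2 \<beta>2) \<or>
     p \<in> cbox (pt \<alpha>1 v1) (pt \<alpha>2 v1) \<or> p \<in> cbox (pt \<alpha>1 v2) (pt \<alpha>2 v2)"
    using u v by (auto simp: cbox_pt)
  then show False using p(1) sV1 sV2 sH1 sH2 by blast
qed

lemma square_bound:
  fixes \<Omega> :: "(real^2) set" and C :: "nat \<Rightarrow> (real^2) set"
  assumes op: "open \<Omega>" and conn: "connected \<Omega>" and ne: "\<Omega> \<noteq> {}" and e: "\<epsilon> > 0"
    and big: "ennreal ((8*\<epsilon>)^2) \<le> emeasure lborel \<Omega>"
    and cov: "frontier \<Omega> \<subseteq> (\<Union>i. C i)" and bC: "\<And>i. bounded (C i)"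
  shows "emeasure lborel {p. a \<le> p$1 \<and> p$1 < a+2*\<epsilon> \<and> b \<le> p$2 \<and> p$2 < b+2*\<epsilon> \<and> p \<notin> \<Omega> \<and> infdist p \<Omega> \<le> \<epsilon>}
     \<le> ennreal (8*\<epsilon>) * (\<Sum>i. if C i \<inter> cbox (pt (a-2*\<epsilon>) (b-2*\<epsilon>)) (pt (a+4*\<epsilon>) (b+4*\<epsilon>)) \<noteq> {}
                               then ennreal (2 * diameter (C i)) else 0)"
proof -
  define T where "T = cbox (pt (a-2*\<epsilon>) (b-2*\<epsilon>)) (pt (a+4*\<epsilon>) (b+4*\<epsilon>))"
  define S where "S = {p. a \<le> p$1 \<and> p$1 < a+2*\<epsilon> \<and> b \<le> p$2 \<and> p$2 < b+2*\<epsilon> \<and> p \<notin> \<Omega> \<and> infdist p \<Omega> \<le> \<epsilon>}"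
  define J where "J = {i. C i \<inter> T \<noteq> {}}"
  define q where "q i = (SOME p. p \<in> C i \<inter> T)" for i
  define d where "d i = diameter (C i)" for i
  define B2 where "B2 = (\<Sum>i. if i \<in> J then ennreal (2 * d i) else 0)"
  have q: "q i \<in> C i \<inter> T" if "i \<in> J" for i
  proof -
    have "\<exists>p. p \<in> C i \<inter> T" using that unfolding J_def by blast
    then show ?thesis unfolding q_def by (rule someI_ex)
  qed
  have d0: "0 \<le> d i" for i unfolding d_def using bC diameter_ge_0 by blast
  have near: "\<bar>p$k - q i$k\<bar> \<le> d i" if "i \<in> J" "p \<in> C i" for i p k
  proof -
    have "\<bar>p$k - q i$k\<bar> = dist (p$k) (q i$k)" by (simp add: dist_real_def)
    also have "\<dots> \<le> dist p (q i)" by (rule dist_vec_nth_le)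
    also have "\<dots> \<le> d i" unfolding d_def using diameter_bounded_bound[OF bC that(2)] q[OF that(1)] by blast
    finally show ?thesis .
  qed
  define F where "F k i = (if i \<in> J then {q i $ k - d i .. q i $ k + d i} else {})" for k i
  have Fb: "F k i \<in> sets borel" for k i unfolding F_def by auto
  have mF: "emeasure lborel (F k i) = (if i \<in> J then ennreal (2 * d i) else 0)" for k i
    using d0[of i] by (cases "i \<in> J") (simp_all add: F_def)
  have sumF: "(\<Sum>i. emeasure lborel (F k i)) = B2" for k unfolding B2_def mF ..
  have goodV: "cbox (pt u (b-2*\<epsilon>)) (pt u (b+4*\<epsilon>)) \<inter> frontier \<Omega> = {}"
    if "u \<notin> (\<Union>i. F 1 i)" "a-2*\<epsilon> \<le> u" "u \<le> a+4*\<epsilon>" for u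
  proof (rule ccontr)
    assume "\<not> ?thesis"
    then obtain p where p: "p \<in> cbox (pt u (b-2*\<epsilon>)) (pt u (b+4*\<epsilon>))" "p \<in> frontier \<Omega>" by blast
    then obtain i where i: "p \<in> C i" using cov by blast
    have "p \<in> T" using p(1) that unfolding T_def by (auto simp: cbox_pt)
    then have iJ: "i \<in> J" using i unfolding J_def by blast
    have "p$1 = u" using p(1) by (auto simp: cbox_pt)
    then have "u \<in> F 1 i" using near[OF iJ i, of 1] iJ unfolding F_def by auto
    then show False using that(1) by blast
  qed
  have goodH: "cbox (pt (a-2*\<epsilon>) v) (pt (a+4*\<epsilon>) v) \<inter> frontier \<Omega> = {}"
    if "v \<notin> (\<Union>i. F 2 i)" "b-2*\<epsilon> \<le> v" "v \<le> b+4*\<epsilon>" for v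
  proof (rule ccontr)
    assume "\<not> ?thesis"
    then obtain p where p: "p \<in> cbox (pt (a-2*\<epsilon>) v) (pt (a+4*\<epsilon>) v)" "p \<in> frontier \<Omega>" by blast
    then obtain i where i: "p \<in> C i" using cov by blast
    have "p \<in> T" using p(1) that unfolding T_def by (auto simp: cbox_pt)
    then have iJ: "i \<in> J" using i unfolding J_def by blast
    have "p$2 = v" using p(1) by (auto simp: cbox_pt)
    then have "v \<in> F 2 i" using near[OF iJ i, of 2] iJ unfolding F_def by auto
    then show False using that(1) by blast
  qed
  have avoid: "\<exists>u\<in>{l<..<l+\<epsilon>/2}. u \<notin> (\<Union>i. F k i)" if "B2 < ennreal (\<epsilon>/2)" for l k
  proof (rule ccontr)
    assume "\<not> ?thesis"
    then have "{l<..<l+\<epsilon>/2} \<subseteq> (\<Union>i. F k i)" by blast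
    from interval_cover[OF _ this Fb] e have "ennreal (l + \<epsilon>/2 - l) \<le> B2" by (simp add: sumF)
    then show False using that by simp
  qed
  have goal: "emeasure lborel S \<le> ennreal (8*\<epsilon>) * B2"
  proof (cases "ennreal (\<epsilon>/2) \<le> B2")
    case True
    have "S \<subseteq> cbox (pt a b) (pt (a+2*\<epsilon>) (b+2*\<epsilon>))" unfolding S_def by (auto simp: cbox_pt)
    then have "emeasure lborel S \<le> emeasure lborel (cbox (pt a b) (pt (a+2*\<epsilon>) (b+2*\<epsilon>)))"
      by (intro emeasure_mono) auto
    also have "\<dots> = ennreal ((a+2*\<epsilon>-a)*(b+2*\<epsilon>-b))" using e by (intro emeasure_cbox_pt) auto
    also have "\<dots> = ennreal (8*\<epsilon>) * ennreal (\<epsilon>/2)" using e by (simp add: ennreal_mult[symmetric] algebra_simps)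
    also have "\<dots> \<le> ennreal (8*\<epsilon>) * B2" using True by (intro mult_left_mono) auto
    finally show ?thesis .
  next
    case False
    then have small: "B2 < ennreal (\<epsilon>/2)" by simp
    show ?thesis
    proof (cases "S = {}")
      case True then show ?thesis by simp
    next
      case False
      then obtain x where x: "x \<in> S" by blast
      have "infdist x \<Omega> < \<epsilon> * 3/2" using x e unfolding S_def by auto
      then obtain y where y: "y \<in> \<Omega>" "dist x y < \<epsilon> * 3/2"
      proof -
        have "bdd_below ((\<lambda>a. dist x a) ` \<Omega>)" by (rule bdd_belowI[of _ 0]) auto
        then show ?thesis using that cINF_less_iff[OF ne, of "dist x" "\<epsilon> * 3/2"] \<open>infdist x \<Omega> < \<epsilon> * 3/2\<close>
          unfolding infdist_notempty[OF ne] by blast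
      qed
      have yk: "\<bar>y$k - x$k\<bar> < \<epsilon> * 3/2" for k
        using dist_vec_nth_le[of x k y] y(2) by (simp add: dist_real_def abs_minus_commute)
      obtain u1 where u1: "u1 \<in> {a-2*\<epsilon><..<a-2*\<epsilon>+\<epsilon>/2}" "u1 \<notin> (\<Union>i. F 1 i)" using avoid[OF small] by blast
      obtain u2 where u2: "u2 \<in> {a+7/2*\<epsilon><..<a+7/2*\<epsilon>+\<epsilon>/2}" "u2 \<notin> (\<Union>i. F 1 i)" using avoid[OF small] by blast
      obtain v1 where v1: "v1 \<in> {b-2*\<epsilon><..<b-2*\<epsilon>+\<epsilon>/2}" "v1 \<notin> (\<Union>i. F 2 i)" using avoid[OF small] by blast
      obtain v2 where v2: "v2 \<in> {b+7/2*\<epsilon><..<b+7/2*\<epsilon>+\<epsilon>/2}" "v2 \<notin> (\<Union>i. F 2 i)" using avoid[OF small] by blast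
      have yb: "y \<in> box (pt u1 v1) (pt u2 v2)"
        using x yk[of 1] yk[of 2] u1 u2 v1 v2 unfolding S_def box_pt by (auto; arith)
      have out: "\<not> \<Omega> \<subseteq> cbox (pt u1 v1) (pt u2 v2)"
      proof
        assume "\<Omega> \<subseteq> cbox (pt u1 v1) (pt u2 v2)"
        then have "emeasure lborel \<Omega> \<le> emeasure lborel (cbox (pt u1 v1) (pt u2 v2))"
          by (intro emeasure_mono) auto
        also have "\<dots> = ennreal ((u2-u1)*(v2-v1))" using u1 u2 v1 v2 e by (intro emeasure_cbox_pt) auto
        finally have "ennreal ((8*\<epsilon>)^2) \<le> ennreal ((u2-u1)*(v2-v1))" using big by simp
        then have "(8*\<epsilon>)^2 \<le> (u2-u1)*(v2-v1)"
          using u1 u2 v1 v2 e by (subst (asm) ennreal_le_iff) auto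
        moreover have "(u2-u1)*(v2-v1) \<le> (6*\<epsilon>)*(6*\<epsilon>)"
          using u1 u2 v1 v2 e by (intro mult_mono) auto
        ultimately show False using e by (simp add: power2_eq_square) (smt (verit) mult_pos_pos)
      qed
      have H1: "cbox (pt (a-2*\<epsilon>) v1) (pt (a+4*\<epsilon>) v1) \<subseteq> \<Omega>"
        apply (rule rect_lemma[OF conn _ _ _ _ _ _ goodV[OF u1(2)] goodV[OF u2(2)] goodH[OF v1(2)] goodH[OF v2(2)] y(1) yb out])
        using u1 u2 v1 v2 e by auto
      define G where "G i = (if i \<in> J then cbox (pt (q i$1 - d i) b) (pt (q i$1 + d i) (b+2*\<epsilon>)) else {})" for i
      have SG: "S \<subseteq> (\<Union>i. G i)"
      proof
        fix p assume p: "p \<in> S"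
        show "p \<in> (\<Union>i. G i)"
        proof (cases "p$1 \<in> (\<Union>i. F 1 i)")
          case True
          then obtain i where i: "p$1 \<in> F 1 i" by blast
          then have "i \<in> J" unfolding F_def by (auto split: if_splits)
          then show ?thesis using i p unfolding F_def G_def S_def by (auto simp: cbox_pt)
        next
          case False
          have r: "a-2*\<epsilon> \<le> p$1" "p$1 \<le> a+4*\<epsilon>" using p e unfolding S_def by auto
          have "pt (p$1) v1 \<in> cbox (pt (p$1) (b-2*\<epsilon>)) (pt (p$1) (b+4*\<epsilon>))"
               "pt (p$1) v1 \<in> cbox (pt (a-2*\<epsilon>) v1) (pt (a+4*\<epsilon>) v1)"
            using r v1 e by (auto simp: cbox_pt)
          then have "cbox (pt (p$1) (b-2*\<epsilon>)) (pt (p$1) (b+4*\<epsilon>)) \<subseteq> \<Omega>"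
            using seg_side[OF _ goodV[OF False r]] H1
            by (meson disjoint_iff is_interval_cbox is_interval_connected subsetD)
          moreover have "p \<in> cbox (pt (p$1) (b-2*\<epsilon>)) (pt (p$1) (b+4*\<epsilon>))"
            using p e unfolding S_def by (auto simp: cbox_pt)
          ultimately show ?thesis using p unfolding S_def by auto
        qed
      qed
      have mG: "emeasure lborel (G i) = ennreal (2*\<epsilon>) * (if i \<in> J then ennreal (2 * d i) else 0)" for i
      proof (cases "i \<in> J")
        case True
        then have "emeasure lborel (G i) = ennreal ((q i$1 + d i - (q i$1 - d i)) * (b+2*\<epsilon>-b))"
          unfolding G_def using d0[of i] e by (simp add: emeasure_cbox_pt)
        then show ?thesis using True d0[of i] e by (simp add: ennreal_mult[symmetric] algebra_simps)
      qed (simp add: G_def)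
      have "emeasure lborel S \<le> emeasure lborel (\<Union>i. G i)"
        using SG by (intro emeasure_mono) (auto simp: G_def)
      also have "\<dots> \<le> (\<Sum>i. emeasure lborel (G i))"
        by (rule emeasure_subadditive_countably) (auto simp: G_def)
      also have "\<dots> = ennreal (2*\<epsilon>) * B2" unfolding mG B2_def by simp
      also have "\<dots> \<le> ennreal (8*\<epsilon>) * B2" using e by (intro mult_right_mono) auto
      finally show ?thesis .
    qed
  qed
  then show ?thesis unfolding S_def B2_def J_def T_def d_def mem_Collect_eq .
qed

lemma count_squares:
  fixes C :: "(real^2) set"
  assumes e: "\<epsilon> > 0" and bC: "bounded C" and dC: "diameter C \<le> \<epsilon>"
  shows "(\<integral>\<^sup>+mn. (if C \<inter> cbox (pt (2*\<epsilon> * of_int (fst mn)-2*\<epsilon>) (2*\<epsilon> * of_int (snd mn)-2*\<epsilon>))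
                            (pt (2*\<epsilon> * of_int (fst mn)+4*\<epsilon>) (2*\<epsilon> * of_int (snd mn)+4*\<epsilon>)) \<noteq> {}
                     then ennreal (2 * diameter C) else 0) \<partial>count_space UNIV)
         \<le> ennreal (2 * diameter C) * 25"
proof (cases "C = {}")
  case True then show ?thesis by simp
next
  case False
  then obtain q where q: "q \<in> C" by blast
  define k where "k j = \<lceil>(q$j - 5*\<epsilon>)/(2*\<epsilon>)\<rceil>" for j
  define K where "K = {k 1..k 1+4} \<times> {k 2..k 2+4}"
  have rng: "k j \<le> m \<and> m \<le> k j + 4" if "2*\<epsilon> * of_int m - 2*\<epsilon> \<le> p$j" "p$j \<le> 2*\<epsilon> * of_int m + 4*\<epsilon>" "p \<in> C" for p j m
  proof -
    have "\<bar>p$j - q$j\<bar> \<le> \<epsilon>"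
    proof -
      have "\<bar>p$j - q$j\<bar> = dist (p$j) (q$j)" by (simp add: dist_real_def)
      also have "\<dots> \<le> dist p q" by (rule dist_vec_nth_le)
      also have "\<dots> \<le> diameter C" using diameter_bounded_bound[OF bC that(3) q] .
      finally show ?thesis using dC by simp
    qed
    then have l: "(q$j - 5*\<epsilon>)/(2*\<epsilon>) \<le> of_int m" and u: "of_int m \<le> (q$j - 5*\<epsilon>)/(2*\<epsilon>) + 4"
      using that e by (auto simp: field_simps)
    from l have "k j \<le> m" unfolding k_def by (simp add: ceiling_le)
    moreover have "of_int m \<le> of_int (k j) + (4::real)" using u le_of_int_ceiling[of "(q$j - 5*\<epsilon>)/(2*\<epsilon>)"]
      unfolding k_def by linarith
    then have "m \<le> k j + 4" by linarith
    ultimately show ?thesis by simp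
  qed
  have "(\<integral>\<^sup>+mn. (if C \<inter> cbox (pt (2*\<epsilon> * of_int (fst mn)-2*\<epsilon>) (2*\<epsilon> * of_int (snd mn)-2*\<epsilon>))
                            (pt (2*\<epsilon> * of_int (fst mn)+4*\<epsilon>) (2*\<epsilon> * of_int (snd mn)+4*\<epsilon>)) \<noteq> {}
                     then ennreal (2 * diameter C) else 0) \<partial>count_space UNIV)
      \<le> (\<integral>\<^sup>+mn. ennreal (2 * diameter C) * indicator K mn \<partial>count_space UNIV)"
  proof (rule nn_integral_mono)
    fix mn :: "int \<times> int"
    obtain m n where mn: "mn = (m, n)" by fastforce
    show "(if C \<inter> cbox (pt (2*\<epsilon> * of_int (fst mn)-2*\<epsilon>) (2*\<epsilon> * of_int (snd mn)-2*\<epsilon>))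
                            (pt (2*\<epsilon> * of_int (fst mn)+4*\<epsilon>) (2*\<epsilon> * of_int (snd mn)+4*\<epsilon>)) \<noteq> {}
                     then ennreal (2 * diameter C) else 0) \<le> ennreal (2 * diameter C) * indicator K mn"
    proof (cases "C \<inter> cbox (pt (2*\<epsilon> * of_int (fst mn)-2*\<epsilon>) (2*\<epsilon> * of_int (snd mn)-2*\<epsilon>))
                            (pt (2*\<epsilon> * of_int (fst mn)+4*\<epsilon>) (2*\<epsilon> * of_int (snd mn)+4*\<epsilon>)) = {}")
      case False
      then obtain p where p: "p \<in> C" "p \<in> cbox (pt (2*\<epsilon> * of_int m-2*\<epsilon>) (2*\<epsilon> * of_int n-2*\<epsilon>))
                            (pt (2*\<epsilon> * of_int m+4*\<epsilon>) (2*\<epsilon> * of_int n+4*\<epsilon>))" unfolding mn by auto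
      have "mn \<in> K" using rng[where m=m and j=1 and p=p] rng[where m=n and j=2 and p=p] p unfolding mn K_def by (auto simp: cbox_pt)
      then show ?thesis by simp
    qed simp
  qed
  also have "\<dots> = ennreal (2 * diameter C) * emeasure (count_space UNIV) K"
    by (rule nn_integral_cmult_indicator) simp
  also have "emeasure (count_space UNIV) K = 25" unfolding K_def
    by (subst emeasure_count_space_finite) (auto simp: card_cartesian_product)
  finally show ?thesis by simp
qed

lemma cover_bound:
  fixes \<Omega> :: "(real^2) set" and C :: "nat \<Rightarrow> (real^2) set"
  assumes op: "open \<Omega>" and conn: "connected \<Omega>" and ne: "\<Omega> \<noteq> {}" and e: "\<epsilon> > 0"
    and big: "ennreal ((8*\<epsilon>)^2) \<le> emeasure lborel \<Omega>"
    and cov: "frontier \<Omega> \<subseteq> (\<Union>i. C i)" and bC: "\<And>i. bounded (C i)" and dC: "\<And>i. diameter (C i) \<le> \<epsilon>"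
  shows "emeasure lborel {x. x \<notin> \<Omega> \<and> infdist x \<Omega> \<le> \<epsilon>} \<le> ennreal (400*\<epsilon>) * (\<Sum>i. ennreal (diameter (C i)))"
proof -
  define Sq where "Sq mn = {p. 2*\<epsilon> * of_int (fst mn) \<le> p$1 \<and> p$1 < 2*\<epsilon> * of_int (fst mn)+2*\<epsilon> \<and>
      2*\<epsilon> * of_int (snd mn) \<le> p$2 \<and> p$2 < 2*\<epsilon> * of_int (snd mn)+2*\<epsilon> \<and> p \<notin> \<Omega> \<and> infdist p \<Omega> \<le> \<epsilon>}"
    for mn :: "int \<times> int"
  define f where "f i mn = (if C i \<inter> cbox (pt (2*\<epsilon> * of_int (fst mn)-2*\<epsilon>) (2*\<epsilon> * of_int (snd mn)-2*\<epsilon>))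
                            (pt (2*\<epsilon> * of_int (fst mn)+4*\<epsilon>) (2*\<epsilon> * of_int (snd mn)+4*\<epsilon>)) \<noteq> {}
                     then ennreal (2 * diameter (C i)) else 0)" for i and mn :: "int \<times> int"
  have fl: "2*\<epsilon> * of_int m \<le> t \<and> t < 2*\<epsilon> * of_int m + 2*\<epsilon> \<longleftrightarrow> m = \<lfloor>t/(2*\<epsilon>)\<rfloor>" for t m
    using e by (subst eq_commute, subst floor_eq_iff) (simp add: field_simps)
  have Sq_eq: "p \<in> Sq mn \<longleftrightarrow> mn = (\<lfloor>p$1/(2*\<epsilon>)\<rfloor>, \<lfloor>p$2/(2*\<epsilon>)\<rfloor>) \<and> p \<notin> \<Omega> \<and> infdist p \<Omega> \<le> \<epsilon>" for p mn
    unfolding Sq_def using fl[of "fst mn" "p$1"] fl[of "snd mn" "p$2"] by (cases mn) auto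
  have A: "{x. x \<notin> \<Omega> \<and> infdist x \<Omega> \<le> \<epsilon>} = (\<Union>mn\<in>UNIV. Sq mn)"
    using Sq_eq by auto
  have disj: "disjoint_family_on Sq UNIV"
    unfolding disjoint_family_on_def using Sq_eq by auto
  have ob: "\<Omega> \<in> sets borel" using op by auto
  have meas: "Sq mn \<in> sets lborel" for mn
  proof -
    have c1: "closed {p::real^2. c \<le> p$j}" for c j by (intro closed_Collect_le continuous_intros)
    have o1: "open {p::real^2. p$j < c}" for c j by (intro open_Collect_less continuous_intros)
    have c2: "closed {p::real^2. infdist p \<Omega> \<le> \<epsilon>}" by (intro closed_Collect_le continuous_intros)
    have c3: "closed (- \<Omega>)" using op by auto
    have "Sq mn = {p. 2*\<epsilon> * of_int (fst mn) \<le> p$1} \<inter> {p. p$1 < 2*\<epsilon> * of_int (fst mn)+2*\<epsilon>} \<inter>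
      {p. 2*\<epsilon> * of_int (snd mn) \<le> p$2} \<inter> {p. p$2 < 2*\<epsilon> * of_int (snd mn)+2*\<epsilon>} \<inter> (- \<Omega>) \<inter>
      {p. infdist p \<Omega> \<le> \<epsilon>}" unfolding Sq_def by auto
    also have "\<dots> \<in> sets lborel" using c1 o1 c2 c3
      by (simp only: sets_lborel) (intro sets.Int borel_closed borel_open; blast)
    finally show ?thesis .
  qed
  have "emeasure lborel {x. x \<notin> \<Omega> \<and> infdist x \<Omega> \<le> \<epsilon>} = (\<integral>\<^sup>+mn. emeasure lborel (Sq mn) \<partial>count_space UNIV)"
    unfolding A by (rule emeasure_UN_countable) (use meas disj in auto)
  also have "\<dots> \<le> (\<integral>\<^sup>+mn. ennreal (8*\<epsilon>) * (\<Sum>i. f i mn) \<partial>count_space UNIV)"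
    by (rule nn_integral_mono) (unfold Sq_def f_def, rule square_bound[OF op conn ne e big cov bC])
  also have "\<dots> = ennreal (8*\<epsilon>) * (\<integral>\<^sup>+mn. (\<Sum>i. f i mn) \<partial>count_space UNIV)"
    by (rule nn_integral_cmult) simp
  also have "(\<integral>\<^sup>+mn. (\<Sum>i. f i mn) \<partial>count_space UNIV) = (\<Sum>i. \<integral>\<^sup>+mn. f i mn \<partial>count_space UNIV)"
    by (rule nn_integral_suminf) simp
  also have "\<dots> \<le> (\<Sum>i. ennreal 50 * ennreal (diameter (C i)))"
  proof (rule suminf_le[OF _ summableI summableI])
    fix i
    have "(\<integral>\<^sup>+mn. f i mn \<partial>count_space UNIV) \<le> ennreal (2 * diameter (C i)) * 25"
      unfolding f_def by (rule count_squares[OF e bC dC])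
    also have "\<dots> = ennreal 50 * ennreal (diameter (C i))"
      using diameter_ge_0[OF bC[of i]] by (simp add: ennreal_mult[symmetric] ennreal_numeral[symmetric] del: ennreal_numeral)
    finally show "(\<integral>\<^sup>+mn. f i mn \<partial>count_space UNIV) \<le> ennreal 50 * ennreal (diameter (C i))" .
  qed
  also have "(\<Sum>i. ennreal 50 * ennreal (diameter (C i))) = ennreal 50 * (\<Sum>i. ennreal (diameter (C i)))"
    by (rule ennreal_suminf_cmult)
  finally have "emeasure lborel {x. x \<notin> \<Omega> \<and> infdist x \<Omega> \<le> \<epsilon>} \<le> ennreal (8*\<epsilon>) * (ennreal 50 * (\<Sum>i. ennreal (diameter (C i))))"
    by (simp add: mult_left_mono)
  also have "\<dots> = ennreal (400*\<epsilon>) * (\<Sum>i. ennreal (diameter (C i)))"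
    using e by (simp add: mult.assoc[symmetric] ennreal_mult[symmetric] del: ennreal_numeral)
  finally show ?thesis .
qed

theorem mainTheorem4:
  "\<exists>c::real. c > 0 \<and>
     (\<forall>(\<Omega>::(real^2) set) (\<epsilon>::real).
        open \<Omega> \<and> connected \<Omega> \<and> \<Omega> \<noteq> {} \<and> \<epsilon> > 0 \<and>
        ennreal ((8 * \<epsilon>)\<^sup>2) \<le> emeasure lborel \<Omega> \<longrightarrow>
        emeasure lborel {x. x \<notin> \<Omega> \<and> infdist x \<Omega> \<le> \<epsilon>}
          \<le> ennreal (c * \<epsilon>) * hausdorff1 (frontier \<Omega>))"
proof (intro exI[of _ 400] conjI allI impI)
  fix \<Omega> :: "(real^2) set" and \<epsilon> :: real
  assume H: "open \<Omega> \<and> connected \<Omega> \<and> \<Omega> \<noteq> {} \<and> \<epsilon> > 0 \<and> ennreal ((8 * \<epsilon>)\<^sup>2) \<le> emeasure lborel \<Omega>"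
  then have op: "open \<Omega>" and conn: "connected \<Omega>" and ne: "\<Omega> \<noteq> {}" and e: "\<epsilon> > 0"
    and big: "ennreal ((8*\<epsilon>)^2) \<le> emeasure lborel \<Omega>" by auto
  define M where "M = emeasure lborel {x. x \<notin> \<Omega> \<and> infdist x \<Omega> \<le> \<epsilon>}"
  define r where "r = 400 * \<epsilon>"
  have r: "r > 0" using e unfolding r_def by simp
  have rr: "ennreal r * ennreal (1/r) = 1" using r by (simp add: ennreal_mult[symmetric])
  have "M * ennreal (1/r) \<le> hausdorff1_pre \<epsilon> (frontier \<Omega>)"
    unfolding hausdorff1_pre_def
  proof (rule INF_greatest)
    fix C :: "nat \<Rightarrow> (real^2) set"
    assume "C \<in> {C. frontier \<Omega> \<subseteq> (\<Union>i. C i) \<and> (\<forall>i. bounded (C i) \<and> diameter (C i) \<le> \<epsilon>)}"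
    then have cov: "frontier \<Omega> \<subseteq> (\<Union>i. C i)" and bC: "\<And>i. bounded (C i)" and dC: "\<And>i. diameter (C i) \<le> \<epsilon>"
      by auto
    have "M \<le> ennreal r * (\<Sum>i. ennreal (diameter (C i)))"
      unfolding M_def r_def by (rule cover_bound[OF op conn ne e big cov bC dC])
    then have "M * ennreal (1/r) \<le> ennreal r * (\<Sum>i. ennreal (diameter (C i))) * ennreal (1/r)"
      by (rule mult_right_mono) simp
    also have "\<dots> = (ennreal r * ennreal (1/r)) * (\<Sum>i. ennreal (diameter (C i)))"
      by (simp add: ac_simps)
    also have "\<dots> = (\<Sum>i. ennreal (diameter (C i)))" using rr by simp
    finally show "M * ennreal (1/r) \<le> (\<Sum>i. ennreal (diameter (C i)))" .
  qed
  also have "hausdorff1_pre \<epsilon> (frontier \<Omega>) \<le> hausdorff1 (frontier \<Omega>)"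
    unfolding hausdorff1_def by (rule SUP_upper) (simp add: e)
  finally have "M * ennreal (1/r) \<le> hausdorff1 (frontier \<Omega>)" .
  then have "ennreal r * (M * ennreal (1/r)) \<le> ennreal r * hausdorff1 (frontier \<Omega>)"
    by (rule mult_left_mono) simp
  moreover have "ennreal r * (M * ennreal (1/r)) = (ennreal r * ennreal (1/r)) * M"
    by (simp add: ac_simps)
  ultimately show "emeasure lborel {x. x \<notin> \<Omega> \<and> infdist x \<Omega> \<le> \<epsilon>} \<le> ennreal (400 * \<epsilon>) * hausdorff1 (frontier \<Omega>)"
    using rr unfolding M_def r_def by simp
qed simp

end
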